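(* Let $T(n)=(3n+1)/2^{v_2(3n+1)}$ be the Syracuse map and, for odd $n$, $L(n)=v_2(n+1)-1$. The natural density, among the odd positive integers, of those odd $n$ with $T^{L(n)+1}(n)<n$ equals $$P_{1\mathrm{cyc}}=\sum_{\ell\ge 0}2^{-(\ell+1)}\cdot 2^{-\lfloor(\log_2 3-1)(\ell+1)\rfloor}=0.71372549767589\ldots$$
   Context: $v_2$ is the $2$-adic valuation; $T^j$ the $j$-th iterate. *)

theory Defs
  imports Complex_Main "HOL-Computational_Algebra.Computational_Algebra"
begin

definition v2 :: "nat \<Rightarrow> nat" where
  "v2 n = multiplicity (2::nat) n"

definition syr :: "nat \<Rightarrow> nat" where
  "syr n = (3 * n + 1) div 2 ^ v2 (3 * n + 1)"

text \<open>L(n) = v2(n+1) - 1 (for odd n, v2(n+1) \<ge> 1, so no truncation occurs).\<close>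
definition Lfun :: "nat \<Rightarrow> nat" where
  "Lfun n = v2 (n + 1) - 1"

end

theory Submission
  imports Defs
begin


lemma v2_eqI: "x = 2^k * x' \<Longrightarrow> odd x' \<Longrightarrow> v2 x = k"
  unfolding v2_def by (rule multiplicity_decomposeI) auto

lemma v2_dvd: "2 ^ v2 x dvd x"
  unfolding v2_def by (rule multiplicity_dvd)

lemma v2_decomp: "x \<noteq> 0 \<Longrightarrow> \<exists>y. x = 2 ^ v2 x * y \<and> odd y"
proof -
  assume x: "x \<noteq> 0"
  have u: "\<not> is_unit (2::nat)" by simp
  show ?thesis unfolding v2_def using multiplicity_decompose'[of x "2::nat"] x u by blast
qed
lemma v2_ge: "x \<noteq> 0 \<Longrightarrow> 2 ^ k dvd x \<Longrightarrow> k \<le> v2 x"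
  unfolding v2_def by (rule multiplicity_geI) auto

lemma syr_step: assumes "y \<ge> 1" shows "syr (2*y - 1) = (3*y - 1) div 2 ^ v2 (3*y - 1)"
proof -
  have z: "3*y - 1 \<noteq> 0" using assms by arith
  obtain w where w: "3*y - 1 = 2 ^ v2 (3*y-1) * w" "odd w" using v2_decomp[OF z] by blast
  have e: "3 * (2*y - 1) + 1 = 2 * (3*y - 1)" using assms by arith
  have "v2 (2 * (3*y - 1)) = Suc (v2 (3*y-1))"
  proof (rule v2_eqI[where x'=w])
    show "2 * (3*y - 1) = 2 ^ Suc (v2 (3*y-1)) * w"
      by (metis w(1) mult.assoc power_Suc)
  qed (rule w(2))
  then have "syr (2*y - 1) = (2 * (3*y - 1)) div (2 * 2 ^ v2 (3*y-1))"
    unfolding syr_def e by (simp only: power_Suc)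
  also have "\<dots> = (3*y - 1) div 2 ^ v2 (3*y-1)" by (rule div_mult_mult1) simp
  finally show ?thesis .
qed

lemma syr_even: assumes "even y" "y \<ge> 2" shows "syr (2*y - 1) = 3*y - 1"
proof -
  have "odd (3*y - 1)" using assms by auto
  then have "v2 (3*y - 1) = 0" by (intro v2_eqI[where x'="3*y-1"]) auto
  then show ?thesis using syr_step assms by simp
qed

lemma iter: assumes "m \<ge> 1" "j \<le> l"
  shows "(syr ^^ j) (2^(l+1) * m - 1) = 2^(l+1-j) * 3^j * m - 1"
  using assms(2)
proof (induction j)
  case 0 then show ?case by simp
next
  case (Suc j)
  have jl: "j < l" using Suc.prems by simp
  have e1: "l+1-j = Suc (l-j)" using jl by simp
  have IH0: "(syr ^^ j) (2^(l+1) * m - 1) = 2^(l+1-j) * 3^j * m - 1"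
    using Suc.IH jl by simp
  have IH: "(syr ^^ j) (2^(l+1) * m - 1) = 2 * (2^(l-j) * 3^j * m) - 1"
    unfolding IH0 e1 by (simp only: power_Suc mult.assoc)
  have ev: "even (2^(l-j) * 3^j * m)" using Suc.prems by simp
  have ge: "2^(l-j) * 3^j * m \<ge> 2" using Suc.prems assms(1)
  proof -
    have "2^(l-j) \<ge> (2::nat)" proof -
      have "(2::nat)^1 \<le> 2^(l-j)" using Suc.prems by (intro power_increasing) auto
      then show ?thesis by simp
    qed
    moreover have "3^j * m \<ge> (1::nat)" using assms(1) by simp
    ultimately have "2^(l-j) * (3^j * m) \<ge> (2::nat) * 1" by (intro mult_le_mono) auto
    then show ?thesis by (simp add: mult.assoc)
  qed
  have "(syr ^^ Suc j) (2^(l+1) * m - 1) = syr ((syr ^^ j) (2^(l+1) * m - 1))" by simp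
  also have "\<dots> = 3 * (2^(l-j) * 3^j * m) - 1"
    unfolding IH by (rule syr_even[OF ev ge])
  also have "3 * (2^(l-j) * 3^j * m) - 1 = 2^(l+1-Suc j) * 3^Suc j * m - 1"
  proof -
    have "l+1-Suc j = l - j" by simp
    moreover have "3 * (2^(l-j) * 3^j * m) = 2^(l-j) * 3^Suc j * (m::nat)" by (simp add: ac_simps)
    ultimately show ?thesis by simp
  qed
  finally show ?case .
qed

lemma iter_last: assumes "m \<ge> 1"
  shows "(syr ^^ (l+1)) (2^(l+1) * m - 1) = (3^(l+1)*m - 1) div 2 ^ v2 (3^(l+1)*m - 1)"
proof -
  have a: "(syr ^^ l) (2^(l+1) * m - 1) = 2 * (3^l*m) - 1"
    using iter[OF assms, of l l] by (simp add: mult.assoc)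
  have "(syr ^^ (l+1)) (2^(l+1) * m - 1) = syr ((syr ^^ l) (2^(l+1) * m - 1))"
    by simp
  also have "\<dots> = syr (2 * (3^l*m) - 1)" by (simp only: a)
  also have "\<dots> = (3 * (3^l*m) - 1) div 2 ^ v2 (3 * (3^l*m) - 1)"
    by (rule syr_step) (use assms in simp)
  also have "3 * (3^l*m) = 3^(l+1)*m" by simp
  finally show ?thesis .
qed



definition cc :: "nat \<Rightarrow> nat" where "cc l = nat \<lfloor>(log 2 3 - 1) * real (l+1)\<rfloor>"

lemma log23: "log 2 3 > (1::real)"
  by (subst less_log_iff) auto

lemma F1: "2^(cc l + l + 1) \<le> (3::nat)^(l+1)"
proof -
  let ?x = "(log 2 3 - 1) * real (l+1)"
  have x0: "?x \<ge> 0" using log23 by simp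
  have "real (cc l) \<le> ?x" unfolding cc_def using x0 by linarith
  moreover have "log 2 ((3::real)^(l+1)) = real (l+1) * log 2 3" by (rule log_nat_power) simp
  ultimately have "real (cc l + l + 1) \<le> log 2 (3^(l+1))"
    by (simp add: algebra_simps)
  then have "2 powr real (cc l + l + 1) \<le> 3^(l+1)"
    by (subst (asm) le_log_iff) auto
  moreover have p: "(2::real) powr real (cc l + l + 1) = 2^(cc l + l + 1)" by (rule powr_realpow) simp
  ultimately have "(2::real)^(cc l + l + 1) \<le> 3^(l+1)" by linarith
  then have "real (2^(cc l + l + 1)) \<le> real (3^(l+1))" by (simp only: of_nat_power of_nat_numeral)
  then show ?thesis by (simp only: of_nat_le_iff)
qed

lemma F2: "(3::nat)^(l+1) < 2^(cc l + l + 2)"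
proof -
  let ?x = "(log 2 3 - 1) * real (l+1)"
  have x0: "?x \<ge> 0" using log23 by simp
  have "?x < real (cc l) + 1" unfolding cc_def using x0 by linarith
  moreover have "log 2 ((3::real)^(l+1)) = real (l+1) * log 2 3" by (rule log_nat_power) simp
  ultimately have "log 2 (3^(l+1)) < real (cc l + l + 2)"
    by (simp add: algebra_simps)
  then have "3^(l+1) < 2 powr real (cc l + l + 2)"
    by (subst (asm) log_less_iff) auto
  moreover have p: "(2::real) powr real (cc l + l + 2) = 2^(cc l + l + 2)" by (rule powr_realpow) simp
  ultimately have "(3::real)^(l+1) < 2^(cc l + l + 2)" by linarith
  then have "real (3^(l+1)) < real (2^(cc l + l + 2))" by (simp only: of_nat_power of_nat_numeral)
  then show ?thesis by (simp only: of_nat_less_iff)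
qed

lemma bad_arith: fixes X Y Z m :: nat
  assumes "X*Y \<le> Z" "m \<ge> 1" "X \<ge> 1"
  shows "\<not> ((Z*m-1) div X < Y*m - 1)"
proof -
  have "X*(Y*m-1) \<le> Z*m - 1"
  proof -
    have "X*(Y*m) \<le> Z*m" using assms(1) by (metis mult.assoc mult_le_mono1)
    moreover have "X*(Y*m-1) = X*(Y*m) - X" by (simp add: diff_mult_distrib2)
    ultimately show ?thesis using assms(3) by arith
  qed
  then have "(X*(Y*m-1)) div X \<le> (Z*m-1) div X" by (rule div_le_mono)
  then show ?thesis using assms(3) by simp
qed

lemma good_arith: fixes X Y Z m :: int
  assumes "X*Y \<ge> Z+1" "Y \<ge> 2" "Z \<ge> 1" "m \<ge> 2*Z" "X \<ge> 1"
  shows "Z*m-1 < X*(Y*m-1)"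
proof (cases "X \<ge> 2*Z")
  case True
  have "Y*m \<ge> 2*m" using assms by (intro mult_right_mono) linarith+
  then have "X*(Y*m-1) \<ge> X*(2*m-1)" using assms by (intro mult_left_mono) linarith+
  moreover have "X*(2*m-1) \<ge> X*m" using assms by (intro mult_left_mono) linarith+
  moreover have "X*m \<ge> (2*Z)*m" using True assms by (intro mult_right_mono) linarith+
  moreover have "Z*m \<ge> 0" using assms by simp
  moreover have "(2*Z)*m = Z*m + Z*m" by (simp add: algebra_simps)
  ultimately show ?thesis by linarith
next
  case False
  have "X*(Y*m-1) = (X*Y)*m - X" by (simp add: algebra_simps)
  moreover have "(X*Y)*m \<ge> (Z+1)*m" using assms by (intro mult_right_mono) linarith+
  moreover have "(Z+1)*m = Z*m + m" by (simp add: algebra_simps)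
  ultimately show ?thesis using False assms by linarith
qed


lemma v2_mult_odd: assumes "odd Z" "x \<noteq> 0" shows "v2 (Z*x) = v2 x"
proof -
  obtain y where y: "x = 2 ^ v2 x * y" "odd y" using v2_decomp[OF assms(2)] by blast
  show ?thesis
  proof (rule v2_eqI[where x'="Z*y"])
    show "Z * x = 2 ^ v2 x * (Z * y)" using y(1) by (metis mult.left_commute)
    show "odd (Z*y)" using assms(1) y(2) by simp
  qed
qed

lemma odd_decomp: assumes "odd n" shows "\<exists>m. n + 1 = 2^(Lfun n + 1) * m \<and> odd m"
proof -
  have nz: "n + 1 \<noteq> 0" by simp
  obtain y where y: "n + 1 = 2 ^ v2 (n+1) * y" "odd y" using v2_decomp[OF nz] by blast
  have "1 \<le> v2 (n+1)" using v2_ge[OF nz, of 1] assms by simp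
  then have "Lfun n + 1 = v2 (n+1)" unfolding Lfun_def by simp
  then show ?thesis using y by metis
qed

lemma good_form: assumes "n + 1 = 2^(l+1)*m" "m \<ge> 1"
  shows "(syr^^(l+1)) n = (3^(l+1)*m - 1) div 2^v2(3^(l+1)*m-1)"
proof -
  have "n = 2^(l+1)*m - 1" using assms(1) by simp
  then show ?thesis using iter_last[OF assms(2), of l] by simp
qed

definition Aset :: "nat \<Rightarrow> nat set" where
  "Aset l = {n. (3^(l+1)*(n+1)) mod 2^(l + cc l + 2) = 2^(l+1)}"

lemma K1: assumes "odd n" "(syr^^(Lfun n + 1)) n < n" shows "n \<in> Aset (Lfun n)"
proof -
  define l where "l = Lfun n"
  obtain m where m: "n + 1 = 2^(l+1) * m" "odd m" using odd_decomp[OF assms(1)] l_def by blast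
  have m1: "m \<ge> 1" using m(2) by (cases m) auto
  define Z :: nat where "Z = 3^(l+1)"
  define k where "k = v2 (Z*m - 1)"
  have "(3::nat)^1 \<le> 3^(l+1)" by (rule power_increasing) simp_all
  then have Z3: "Z \<ge> 3" unfolding Z_def by simp
  have gf: "(syr^^(l+1)) n = (Z*m - 1) div 2^k"
    using good_form[OF m(1) m1] unfolding Z_def k_def .
  have nn: "n = 2^(l+1)*m - 1" using m(1) by arith
  have g: "(Z*m - 1) div 2^k < 2^(l+1)*m - 1"
    using assms(2) unfolding l_def[symmetric] gf using nn by simp
  have kge: "k \<ge> cc l + 1"
  proof (rule ccontr)
    assume "\<not> k \<ge> cc l + 1"
    then have "k \<le> cc l" by simp
    then have "(2::nat)^k * 2^(l+1) \<le> 2^(cc l) * 2^(l+1)" by (intro mult_right_mono power_increasing) auto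
    also have "\<dots> = 2^(cc l + l + 1)" by (simp add: power_add)
    also have "\<dots> \<le> Z" unfolding Z_def by (rule F1)
    finally have "2^k * 2^(l+1) \<le> Z" .
    from bad_arith[OF this m1] g show False by simp
  qed
  have "Z*m \<ge> 3*1" using Z3 m1 by (intro mult_le_mono)
  then have nz: "Z*m - 1 \<noteq> 0" by arith
  have "2^(cc l + 1) dvd Z*m - 1"
  proof -
    have "(2::nat)^(cc l + 1) dvd 2^k" by (rule le_imp_power_dvd[OF kge])
    moreover have "2^k dvd Z*m - 1" unfolding k_def by (rule v2_dvd)
    ultimately show ?thesis by (rule dvd_trans)
  qed
  then obtain j where j: "Z*m - 1 = 2^(cc l + 1) * j" by blast
  have Zm: "Z*m = 1 + 2^(cc l + 1) * j" using j nz by arith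
  have "Z*(n+1) = 2^(l+1) * (Z*m)" using m(1) by simp
  also have "\<dots> = 2^(l+1) + 2^(l + cc l + 2) * j" unfolding Zm
    by (simp add: algebra_simps power_add)
  finally have e: "Z*(n+1) = 2^(l+1) + 2^(l + cc l + 2) * j" .
  have lt: "(2::nat)^(l+1) < 2^(l + cc l + 2)" by (intro power_strict_increasing) auto
  have "(Z*(n+1)) mod 2^(l + cc l + 2) = 2^(l+1)" unfolding e using lt by simp
  then show ?thesis unfolding Aset_def Z_def l_def by simp
qed



lemma K2: assumes "n \<in> Aset l"
  shows "odd n \<and> Lfun n = l \<and> (\<exists>m. n + 1 = 2^(l+1)*m \<and> 2^(cc l + 1) dvd 3^(l+1)*m - 1)"
proof -
  define Z :: nat where "Z = 3^(l+1)"
  define Y :: nat where "Y = 2^(l+1)"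
  define W :: nat where "W = 2^(cc l + 1)"
  have QYW: "(2::nat)^(l + cc l + 2) = Y * W" unfolding Y_def W_def by (simp add: power_add[symmetric])
  have md: "(Z*(n+1)) mod (Y*W) = Y" using assms unfolding Aset_def Z_def Y_def QYW by simp
  define j where "j = (Z*(n+1)) div (Y*W)"
  have "(Z*(n+1)) div (Y*W) * (Y*W) + (Z*(n+1)) mod (Y*W) = Z*(n+1)" by (rule div_mult_mod_eq)
  then have "Z*(n+1) = (Y*W)*j + Y" unfolding md j_def by (simp add: mult.commute)
  then have e: "Z*(n+1) = Y * (W*j + 1)" by (simp add: algebra_simps)
  have oW: "odd (W*j + 1)" unfolding W_def by simp
  have oZ: "odd Z" unfolding Z_def by simp
  have "v2 (Z*(n+1)) = l+1" unfolding e Y_def by (rule v2_eqI[OF refl oW])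
  then have v: "v2 (n+1) = l+1" using v2_mult_odd[OF oZ, of "n+1"] by simp
  have "2^(l+1) dvd n+1" using v2_dvd[of "n+1"] v by simp
  then obtain m where m: "n+1 = Y*m" unfolding Y_def by blast
  have "2 dvd n+1" using m unfolding Y_def by simp
  then have on: "odd n" by simp
  have L: "Lfun n = l" unfolding Lfun_def v by simp
  have "Y * (Z*m) = Z * (Y*m)" by (simp add: ac_simps)
  also have "\<dots> = Z*(n+1)" using m by simp
  also have "\<dots> = Y * (W*j + 1)" by (rule e)
  finally have "Y * (Z*m) = Y * (W*j + 1)" .
  moreover have "Y \<noteq> 0" unfolding Y_def by simp
  ultimately have "Z*m = W*j + 1" by (metis mult_left_cancel)
  then have "W dvd Z*m - 1" by simp
  then show ?thesis using on L m unfolding Z_def Y_def W_def by blast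
qed

lemma K3: assumes "n \<in> Aset l" "2^(l+2)*3^(l+1) \<le> n+1"
  shows "(syr^^(Lfun n + 1)) n < n"
proof -
  obtain m where on: "odd n" and L: "Lfun n = l" and m: "n + 1 = 2^(l+1)*m"
     and dv: "2^(cc l + 1) dvd 3^(l+1)*m - 1"
    using K2[OF assms(1)] by blast
  define Z :: nat where "Z = 3^(l+1)"
  define Y :: nat where "Y = 2^(l+1)"
  define k where "k = v2 (Z*m - 1)"
  have m1: "m \<ge> 1" using m by (cases m) auto
  have "(3::nat)^1 \<le> 3^(l+1)" by (rule power_increasing) simp_all
  then have Z3: "Z \<ge> 3" unfolding Z_def by simp
  have "Z*m \<ge> 3*1" using Z3 m1 by (intro mult_le_mono)
  then have nz: "Z*m - 1 \<noteq> 0" by arith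
  have kge: "cc l + 1 \<le> k" unfolding k_def using v2_ge[OF nz] dv unfolding Z_def by simp
  have Y2: "Y \<ge> 2" unfolding Y_def
  proof -
    have "(2::nat)^1 \<le> 2^(l+1)" by (rule power_increasing) simp_all
    then show "2 \<le> (2::nat)^(l+1)" by simp
  qed
  have "2^(l+2)*3^(l+1) = Y * (2*Z)" unfolding Y_def Z_def by simp
  then have "Y * (2*Z) \<le> Y * m" using assms(2) m unfolding Y_def by simp
  then have m2: "2*Z \<le> m" using Y2 by simp
  have "Z < 2^(cc l + l + 2)" unfolding Z_def by (rule F2)
  also have "(2::nat)^(cc l + l + 2) = 2^(cc l + 1) * Y" unfolding Y_def by (simp add: power_add[symmetric])
  also have "\<dots> \<le> 2^k * Y" using kge by (intro mult_right_mono power_increasing) auto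
  finally have XY: "Z + 1 \<le> 2^k * Y" by simp
  have X1: "(2::nat)^k \<ge> 1" by simp
  have "int (Z+1) \<le> int (2^k * Y)" using XY by (simp only: of_nat_le_iff)
  then have i1: "int (2^k) * int Y \<ge> int Z + 1" by simp
  have i2: "int Y \<ge> 2" using Y2 by simp
  have i3: "int Z \<ge> 1" using Z3 by simp
  have i4: "int m \<ge> 2 * int Z" using m2 by simp
  have i5: "int (2^k) \<ge> 1" using X1 by simp
  have "int Z * int m - 1 < int (2^k) * (int Y * int m - 1)"
    by (rule good_arith[OF i1 i2 i3 i4 i5])
  moreover have "int (Z*m - 1) = int Z * int m - 1"
  proof -
    have "1 \<le> Z*m" using nz by arith
    then have "int (Z*m - 1) = int (Z*m) - int 1" by (rule of_nat_diff)
    then show ?thesis by simp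
  qed
  moreover have "int (Y*m - 1) = int Y * int m - 1"
  proof -
    have "1 \<le> Y*m" using Y2 m1 by (metis le_trans mult_le_mono one_le_numeral mult_1_right)
    then have "int (Y*m - 1) = int (Y*m) - int 1" by (rule of_nat_diff)
    then show ?thesis by simp
  qed
  then have "int (2^k * (Y*m - 1)) = int (2^k) * (int Y * int m - 1)" by (simp only: of_nat_mult)
  ultimately have "int (Z*m - 1) < int (2^k * (Y*m - 1))" by linarith
  then have "Z*m - 1 < 2^k * (Y*m - 1)" by (simp only: of_nat_less_iff)
  then have lt: "Z*m - 1 < (Y*m - 1) * 2^k" by (simp only: mult.commute)
  have gf: "(syr^^(l+1)) n = (Z*m - 1) div 2^k"
    using good_form[OF m m1] unfolding Z_def k_def .
  have "(Z*m - 1) div 2^k < Y*m - 1" using lt by (simp add: div_less_iff_less_mult)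
  then show ?thesis unfolding L gf using m unfolding Y_def by simp
qed



lemma modq_aux: "0<q \<Longrightarrow> t<q \<Longrightarrow> ((N::nat) + q - t) mod q = 0 \<longleftrightarrow> N mod q = t"
  by (smt (verit) add.assoc add.commute add_cancel_right_right
    add_diff_cancel_left' less_imp_add_positive mod_add_right_eq mod_if mod_self)

lemma card_mod_exact: assumes "0 < q" "t < q"
  shows "card {n. n < N \<and> n mod q = t} = (N + q - 1 - t) div q"
proof (induction N)
  case 0
  have "q - 1 - t < q" using assms by simp
  then show ?case by simp
next
  case (Suc N)
  have S: "{n. n < Suc N \<and> n mod q = t} = {n. n < N \<and> n mod q = t} \<union> (if N mod q = t then {N} else {})"
    by (auto simp: less_Suc_eq)
  have fin: "finite {n. n < N \<and> n mod q = t}" by simp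
  have c: "card {n. n < Suc N \<and> n mod q = t} = card {n. n < N \<and> n mod q = t} + (if N mod q = t then 1 else 0)"
    unfolding S using fin by (auto simp: card_insert_if)
  have e: "Suc N + q - 1 - t = Suc (N + q - 1 - t)" using assms by simp
  have e2: "Suc (N + q - 1 - t) = N + q - t" using assms by simp
  have "(Suc N + q - 1 - t) div q = (N + q - 1 - t) div q + (if N mod q = t then 1 else 0)"
  proof -
    have d: "Suc (N + q - 1 - t) div q = (N + q - 1 - t) div q + (if Suc (N + q - 1 - t) mod q = 0 then 1 else 0)"
      by (simp only: div_Suc) simp
    have "(Suc (N + q - 1 - t) mod q = 0) = (N mod q = t)" unfolding e2 by (rule modq_aux[OF assms])
    then show ?thesis unfolding e d by simp
  qed
  then show ?case using c Suc.IH by simp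
qed

lemma card_mod_bounds: assumes "0 < q" "t < q"
  shows "real N / real q - 1 \<le> real (card {n. n < N \<and> n mod q = t})"
    and "real (card {n. n < N \<and> n mod q = t}) \<le> real N / real q + 1"
proof -
  let ?c = "card {n. n < N \<and> n mod q = t}"
  have c: "?c = (N + q - 1 - t) div q" by (rule card_mod_exact[OF assms])
  have "?c * q \<le> N + q - 1 - t" unfolding c by (rule div_times_less_eq_dividend)
  then have "?c * q \<le> N + q" by linarith
  then have u: "real ?c * real q \<le> real N + real q" by (simp only: of_nat_add[symmetric] of_nat_mult[symmetric] of_nat_le_iff)
  have "N + q - 1 - t < (?c + 1) * q" unfolding c by (simp add: dividend_less_div_times assms)
  then have "N \<le> ?c * q + q" using assms by (simp add: algebra_simps)
  then have "real N \<le> real ?c * real q + real q" by (simp only: of_nat_add[symmetric] of_nat_mult[symmetric] of_nat_le_iff)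
  then have l: "real N \<le> (real ?c + 1) * real q" by (simp add: algebra_simps)
  have qp: "real q > 0" using assms by simp
  show "real N / real q - 1 \<le> real ?c" using l qp by (simp add: field_simps)
  show "real ?c \<le> real N / real q + 1" using u qp by (simp add: field_simps)
qed


lemma modshift: assumes "0<(q::nat)" shows "(n+1) mod q = w mod q \<longleftrightarrow> n mod q = (w + q - 1) mod q"
proof
  assume h: "(n+1) mod q = w mod q"
  have "(n+1+(q-1)) mod q = (w + (q-1)) mod q" using h by (metis mod_add_left_eq)
  moreover have "n+1+(q-1) = n + q" using assms by simp
  moreover have "w + (q-1) = w + q - 1" using assms by simp
  ultimately show "n mod q = (w + q - 1) mod q" by simp
next
  assume h: "n mod q = (w + q - 1) mod q"
  have "(n+1) mod q = (w + q - 1 + 1) mod q" using h by (metis mod_add_left_eq)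
  moreover have "w + q - 1 + 1 = w + q" using assms by simp
  ultimately show "(n+1) mod q = w mod q" by simp
qed
lemma inv2: assumes "(a*u) mod q = 1 mod (q::nat)" "(n+1) mod q = (u*b) mod q" shows "(a*(n+1)) mod q = b mod q"
proof -
  have "(a*(n+1)) mod q = (a*(u*b)) mod q" using assms(2) by (metis mod_mult_right_eq)
  also have "\<dots> = ((a*u)*b) mod q" by (simp add: mult.assoc)
  also have "\<dots> = ((a*u) mod q * b) mod q" by (simp add: mod_mult_left_eq)
  also have "\<dots> = (1 mod q * b) mod q" using assms(1) by simp
  also have "\<dots> = b mod q" by (simp add: mod_mult_left_eq)
  finally show ?thesis .
qed

lemma inv1: "(a*u) mod q = 1 mod (q::nat) \<Longrightarrow> (a*(n+1)) mod q = b mod q \<Longrightarrow> (n+1) mod q = (u*b) mod q"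
  by (metis (no_types, opaque_lifting) mod_mult_left_eq mult.assoc mult.commute mult.right_neutral)

lemma res_class: fixes a q b :: nat assumes "0 < q" "coprime a q" "a \<noteq> 0"
  shows "\<exists>t<q. \<forall>n. (a*(n+1)) mod q = b mod q \<longleftrightarrow> n mod q = t"
proof -
  have a0: "a \<noteq> 0" using assms(3) .
  obtain u y where "a*u = q*y + gcd a q" using bezout_nat[OF a0] by blast
  then have "a*u = q*y + 1" using assms(2) by simp
  then have au: "(a*u) mod q = 1 mod q" by (metis add.commute mod_mult_self2 mult.commute)
  define t where "t = (u*b + q - 1) mod q"
  have "\<forall>n. (a*(n+1)) mod q = b mod q \<longleftrightarrow> n mod q = t"
  proof
    fix n
    have "(a*(n+1)) mod q = b mod q \<longleftrightarrow> (n+1) mod q = (u*b) mod q"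
      using inv1[OF au] inv2[OF au] by blast
    also have "\<dots> \<longleftrightarrow> n mod q = t" unfolding t_def by (rule modshift[OF assms(1)])
    finally show "(a*(n+1)) mod q = b mod q \<longleftrightarrow> n mod q = t" .
  qed
  moreover have "t < q" unfolding t_def using assms(1) by simp
  ultimately show ?thesis by blast
qed

lemma Aset_class: "\<exists>t < 2^(l + cc l + 2). \<forall>n. n \<in> Aset l \<longleftrightarrow> n mod 2^(l + cc l + 2) = t"
proof -
  have c2: "coprime (3::nat) 2" by simp
  have c3: "coprime ((3::nat)^(l+1)) 2" using c2 by (metis coprime_power_left_iff)
  have c: "coprime ((3::nat)^(l+1)) (2^(l + cc l + 2))" using c3 by (metis coprime_power_right_iff)
  have lt: "(2::nat)^(l+1) < 2^(l + cc l + 2)" by (intro power_strict_increasing) auto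
  obtain t where "t < 2^(l + cc l + 2)" "\<forall>n. ((3::nat)^(l+1)*(n+1)) mod 2^(l + cc l + 2) = (2^(l+1)) mod 2^(l + cc l + 2) \<longleftrightarrow> n mod 2^(l + cc l + 2) = t"
    using res_class[OF _ c, of "2^(l+1)"] by auto
  moreover have "(2::nat)^(l+1) mod 2^(l + cc l + 2) = 2^(l+1)" using lt by (rule mod_less)
  ultimately show ?thesis unfolding Aset_def by auto
qed



definition dd :: "nat \<Rightarrow> real" where "dd l = 1 / 2^(l + cc l + 2)"

lemma card_Aset_bounds:
  "real N * dd l - 1 \<le> real (card {n. n < N \<and> n \<in> Aset l})"
  "real (card {n. n < N \<and> n \<in> Aset l}) \<le> real N * dd l + 1"
proof -
  obtain t where t: "t < 2^(l + cc l + 2)" "\<forall>n. n \<in> Aset l \<longleftrightarrow> n mod 2^(l + cc l + 2) = t"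
    using Aset_class by blast
  have e: "{n. n < N \<and> n \<in> Aset l} = {n. n < N \<and> n mod 2^(l + cc l + 2) = t}" using t(2) by auto
  have q: "(0::nat) < 2^(l + cc l + 2)" by simp
  have r: "real N / real ((2::nat)^(l + cc l + 2)) = real N * dd l" unfolding dd_def by simp
  show "real N * dd l - 1 \<le> real (card {n. n < N \<and> n \<in> Aset l})"
    unfolding e using card_mod_bounds(1)[OF q t(1), of N] r by simp
  show "real (card {n. n < N \<and> n \<in> Aset l}) \<le> real N * dd l + 1"
    unfolding e using card_mod_bounds(2)[OF q t(1), of N] r by simp
qed

lemma upper_bound:
  "real (card {n. n < N \<and> odd n \<and> (syr ^^ (Lfun n + 1)) n < n})
     \<le> (\<Sum>l<L. real N * dd l + 1) + real N / 2^(L+1) + 1"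
proof -
  let ?G = "{n. n < N \<and> odd n \<and> (syr ^^ (Lfun n + 1)) n < n}"
  let ?U = "\<Union>l\<in>{..<L}. {n. n < N \<and> n \<in> Aset l}"
  let ?R = "{n. n < N \<and> n mod 2^(L+1) = 2^(L+1) - 1}"
  have sub: "?G \<subseteq> ?U \<union> ?R"
  proof
    fix n assume n: "n \<in> ?G"
    then have on: "odd n" and nN: "n < N" and gd: "(syr ^^ (Lfun n + 1)) n < n" by auto
    show "n \<in> ?U \<union> ?R"
    proof (cases "Lfun n < L")
      case True
      then show ?thesis using K1[OF on gd] nN by auto
    next
      case False
      obtain m where m: "n + 1 = 2^(Lfun n + 1) * m" using odd_decomp[OF on] by blast
      have "(2::nat)^(L+1) dvd 2^(Lfun n + 1)" using False by (intro le_imp_power_dvd) simp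
      then have "(2::nat)^(L+1) dvd n + 1" unfolding m by simp
      then have "(n+1) mod 2^(L+1) = 0 mod 2^(L+1)" by simp
      then have "n mod 2^(L+1) = (0 + 2^(L+1) - 1) mod 2^(L+1)"
        using modshift[of "2^(L+1)" n 0] by simp
      then have "n mod 2^(L+1) = 2^(L+1) - 1" by simp
      then show ?thesis using nN by auto
    qed
  qed
  have finU: "finite ?U" by auto
  have finR: "finite ?R" by auto
  have "card ?G \<le> card (?U \<union> ?R)" using sub finU finR by (intro card_mono) auto
  also have "\<dots> \<le> card ?U + card ?R" by (rule card_Un_le)
  also have "card ?U \<le> (\<Sum>l<L. card {n. n < N \<and> n \<in> Aset l})" by (rule card_UN_le) simp
  finally have c: "card ?G \<le> (\<Sum>l<L. card {n. n < N \<and> n \<in> Aset l}) + card ?R" by simp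
  have "real (card ?G) \<le> real ((\<Sum>l<L. card {n. n < N \<and> n \<in> Aset l}) + card ?R)"
    using c by (simp only: of_nat_le_iff)
  also have "\<dots> = (\<Sum>l<L. real (card {n. n < N \<and> n \<in> Aset l})) + real (card ?R)"
    by (simp only: of_nat_add of_nat_sum)
  also have "(\<Sum>l<L. real (card {n. n < N \<and> n \<in> Aset l})) \<le> (\<Sum>l<L. real N * dd l + 1)"
    by (intro sum_mono card_Aset_bounds(2))
  also have "real (card ?R) \<le> real N / real ((2::nat)^(L+1)) + 1"
    by (rule card_mod_bounds(2)) auto
  finally show ?thesis by simp
qed

lemma lower_bound:
  "(\<Sum>l<L. real N * dd l - 1 - real (2^(l+2)*3^(l+1)))
     \<le> real (card {n. n < N \<and> odd n \<and> (syr ^^ (Lfun n + 1)) n < n})"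
proof -
  let ?G = "{n. n < N \<and> odd n \<and> (syr ^^ (Lfun n + 1)) n < n}"
  define B :: "nat \<Rightarrow> nat" where "B l = 2^(l+2)*3^(l+1)" for l
  define C where "C l = {n. n < N \<and> n \<in> Aset l \<and> B l \<le> n + 1}" for l
  have sub: "(\<Union>l\<in>{..<L}. C l) \<subseteq> ?G"
  proof
    fix n assume "n \<in> (\<Union>l\<in>{..<L}. C l)"
    then obtain l where n: "n < N" "n \<in> Aset l" "B l \<le> n + 1" unfolding C_def by auto
    show "n \<in> ?G" using n K2[OF n(2)] K3[OF n(2)] unfolding B_def by auto
  qed
  have disj: "\<forall>i\<in>{..<L}. \<forall>j\<in>{..<L}. i \<noteq> j \<longrightarrow> C i \<inter> C j = {}"
  proof (intro ballI impI)
    fix i j :: nat assume ij: "i \<noteq> j"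
    show "C i \<inter> C j = {}"
    proof (rule ccontr)
      assume "C i \<inter> C j \<noteq> {}"
      then obtain n where "n \<in> Aset i" "n \<in> Aset j" unfolding C_def by auto
      then have "Lfun n = i" "Lfun n = j" using K2 by blast+
      then show False using ij by simp
    qed
  qed
  have finC: "\<forall>i\<in>{..<L}. finite (C i)" unfolding C_def by auto
  have cU: "card (\<Union>l\<in>{..<L}. C l) = (\<Sum>l<L. card (C l))"
    by (rule card_UN_disjoint) (use finC disj in auto)
  have each: "real N * dd l - 1 - real (B l) \<le> real (card (C l))" for l
  proof -
    have "{n. n < N \<and> n \<in> Aset l} \<subseteq> C l \<union> {..<B l}" unfolding C_def by auto
    then have "card {n. n < N \<and> n \<in> Aset l} \<le> card (C l \<union> {..<B l})"
      by (intro card_mono) (auto simp: C_def)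
    also have "\<dots> \<le> card (C l) + B l" using card_Un_le[of "C l" "{..<B l}"] by simp
    finally have "real (card {n. n < N \<and> n \<in> Aset l}) \<le> real (card (C l) + B l)"
      by (simp only: of_nat_le_iff)
    then have "real (card {n. n < N \<and> n \<in> Aset l}) \<le> real (card (C l)) + real (B l)"
      by (simp only: of_nat_add)
    then show ?thesis using card_Aset_bounds(1)[of N l] by linarith
  qed
  have "(\<Sum>l<L. real N * dd l - 1 - real (B l)) \<le> (\<Sum>l<L. real (card (C l)))"
    by (intro sum_mono each)
  also have "\<dots> = real (card (\<Union>l\<in>{..<L}. C l))" unfolding cU by simp
  also have "\<dots> \<le> real (card ?G)" using sub by (intro of_nat_mono card_mono) auto
  finally show ?thesis unfolding B_def .
qed



lemma dd_nonneg: "dd l \<ge> 0" unfolding dd_def by simp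

lemma dd_le: "dd l \<le> (1/2)^(l+2)"
proof -
  have "(2::real)^(l+2) \<le> 2^(l + cc l + 2)" by (intro power_increasing) auto
  then show ?thesis unfolding dd_def by (simp add: power_one_over frac_le)
qed

lemma geo_tail: "(\<lambda>n. (1/2::real)^(n+L+2)) sums ((1/2)^(L+1))"
proof -
  have "(\<lambda>n. (1/2::real)^n) sums (1 / (1 - 1/2))" by (rule geometric_sums) simp
  then have "(\<lambda>n. (1/2::real)^(L+2) * (1/2)^n) sums ((1/2)^(L+2) * (1 / (1 - 1/2)))"
    by (rule sums_mult)
  moreover have "(\<lambda>n. (1/2::real)^(L+2) * (1/2)^n) = (\<lambda>n. (1/2::real)^(n+L+2))"
    by (rule ext) (simp add: power_add[symmetric] add.commute add.left_commute)
  moreover have "(1/2::real)^(L+2) * (1 / (1 - 1/2)) = (1/2)^(L+1)" by simp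
  ultimately show ?thesis by simp
qed

lemma summable_dd: "summable dd"
proof (rule summable_comparison_test)
  show "\<exists>N. \<forall>n\<ge>N. norm (dd n) \<le> (1/2)^(n+0+2)" using dd_le dd_nonneg by auto
  show "summable (\<lambda>n. (1/2::real)^(n+0+2))" using geo_tail[of 0] by (rule sums_summable)
qed

lemma dd_tail: "0 \<le> suminf dd - (\<Sum>l<L. dd l)" "suminf dd - (\<Sum>l<L. dd l) \<le> (1/2)^(L+1)"
proof -
  have sp: "suminf dd = (\<Sum>n. dd (n + L)) + (\<Sum>l<L. dd l)"
    by (rule suminf_split_initial_segment[OF summable_dd])
  have st: "summable (\<lambda>n. dd (n + L))" using summable_dd by (rule summable_ignore_initial_segment)
  have "(\<Sum>n. dd (n + L)) \<ge> 0" by (rule suminf_nonneg[OF st]) (simp add: dd_nonneg)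
  then show "0 \<le> suminf dd - (\<Sum>l<L. dd l)" using sp by simp
  have "(\<Sum>n. dd (n + L)) \<le> (\<Sum>n. (1/2::real)^(n+L+2))"
    by (rule suminf_le) (use dd_le st geo_tail[of L] in \<open>auto simp: sums_summable add.assoc\<close>)
  also have "\<dots> = (1/2)^(L+1)" using geo_tail[of L] by (rule sums_unique[symmetric])
  finally show "suminf dd - (\<Sum>l<L. dd l) \<le> (1/2)^(L+1)" using sp by simp
qed



lemma g_bound:
  fixes N L :: nat assumes N0: "N > 0"
  defines "K \<equiv> real L + 1 + (\<Sum>l<L. 1 + real (2^(l+2)*3^(l+1)))"
  shows "\<bar>real (card {n. n < N \<and> odd n \<and> (syr ^^ (Lfun n + 1)) n < n}) / real N - suminf dd\<bar>
         \<le> (1/2)^(L+1) + K / real N"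
proof -
  let ?g = "real (card {n. n < N \<and> odd n \<and> (syr ^^ (Lfun n + 1)) n < n})"
  let ?s = "\<Sum>l<L. dd l"
  define P where "P = (\<Sum>l<L. 1 + real (2^(l+2)*3^(l+1)))"
  have P0: "P \<ge> 0" unfolding P_def by (intro sum_nonneg) auto
  have Nr: "real N > 0" using N0 by simp
  have u1: "(\<Sum>l<L. real N * dd l + 1) = real N * ?s + real L"
    by (simp add: sum.distrib sum_distrib_left)
  have l1: "(\<Sum>l<L. real N * dd l - 1 - real (2^(l+2)*3^(l+1))) = real N * ?s - P"
    unfolding P_def by (simp add: sum_subtractf sum.distrib sum_distrib_left algebra_simps)
  have up: "?g \<le> real N * ?s + real L + real N / 2^(L+1) + 1"
    using upper_bound[of N L] u1 by simp
  have lo: "real N * ?s - P \<le> ?g" using lower_bound[where L=L and N=N] l1 by simp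
  have up2: "?g / real N \<le> ?s + (1/2)^(L+1) + (real L + 1) / real N"
  proof -
    have "?g / real N \<le> (real N * ?s + real L + real N / 2^(L+1) + 1) / real N"
      using up Nr by (simp add: divide_right_mono)
    also have "\<dots> = ?s + (1/2)^(L+1) + (real L + 1) / real N"
      using Nr by (simp add: field_simps)
    finally show ?thesis .
  qed
  have lo2: "?s - P / real N \<le> ?g / real N"
  proof -
    have "(real N * ?s - P) / real N \<le> ?g / real N" using lo Nr by (simp add: divide_right_mono)
    moreover have "(real N * ?s - P) / real N = ?s - P / real N" using Nr by (simp add: field_simps)
    ultimately show ?thesis by simp
  qed
  have K: "K = real L + 1 + P" unfolding K_def P_def ..
  have KN: "K / real N = (real L + 1) / real N + P / real N" unfolding K by (simp add: add_divide_distrib)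
  have a: "(real L + 1) / real N \<ge> 0" "P / real N \<ge> 0" using Nr P0 by auto
  show ?thesis using up2 lo2 dd_tail[of L] KN a by linarith
qed

lemma lim_helper:
  fixes X :: "nat \<Rightarrow> real"
  assumes "\<And>e. e > 0 \<Longrightarrow> \<exists>N0. \<forall>N\<ge>N0. \<bar>X N - a\<bar> < e"
  shows "X \<longlonglongrightarrow> a"
  using assms by (intro LIMSEQ_I) (simp add: real_norm_def)

lemma small_eventually:
  fixes K e :: real assumes "e > 0"
  shows "\<exists>N0::nat. \<forall>N\<ge>N0. N > 0 \<and> \<bar>K\<bar> / real N < e"
proof -
  obtain M :: nat where M: "\<bar>K\<bar> / e < real M" using reals_Archimedean2 by blast
  show ?thesis
  proof (intro exI allI impI conjI)
    fix N assume N: "Suc M \<le> N"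
    then show "N > 0" by simp
    have "\<bar>K\<bar> < e * real M" using M assms by (simp add: pos_divide_less_eq mult.commute)
    also have "\<dots> \<le> e * real N" using N assms by (intro mult_left_mono) auto
    finally have "\<bar>K\<bar> < e * real N" .
    moreover have "real N > 0" using N by simp
    ultimately show "\<bar>K\<bar> / real N < e" by (simp add: pos_divide_less_eq mult.commute)
  qed
qed

lemma g_lim: "(\<lambda>N. real (card {n. n < N \<and> odd n \<and> (syr ^^ (Lfun n + 1)) n < n}) / real N)
   \<longlonglongrightarrow> suminf dd"
proof (rule lim_helper)
  fix e :: real assume e: "e > 0"
  obtain L where L: "(1/2::real)^L < e/2" using real_arch_pow_inv[of "e/2" "1/2"] e by auto
  have L1: "(1/2::real)^(L+1) \<le> (1/2)^L" by (intro power_decreasing) auto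
  define K where "K = real L + 1 + (\<Sum>l<L. 1 + real ((2::nat)^(l+2)*3^(l+1)))"
  have K0: "K \<ge> 0" unfolding K_def by (intro add_nonneg_nonneg sum_nonneg) auto
  obtain N0 where N0: "\<forall>N\<ge>N0. N > 0 \<and> \<bar>K\<bar> / real N < e/2" using small_eventually[of "e/2" K] e by auto
  show "\<exists>N0. \<forall>N\<ge>N0. \<bar>real (card {n. n < N \<and> odd n \<and> (syr ^^ (Lfun n + 1)) n < n}) / real N - suminf dd\<bar> < e"
  proof (intro exI allI impI)
    fix N assume N: "N \<ge> N0"
    then have Np: "N > 0" and KN: "\<bar>K\<bar> / real N < e/2" using N0 by auto
    have "\<bar>real (card {n. n < N \<and> odd n \<and> (syr ^^ (Lfun n + 1)) n < n}) / real N - suminf dd\<bar>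
         \<le> (1/2)^(L+1) + K / real N" using g_bound[OF Np, of L] unfolding K_def by simp
    then show "\<bar>real (card {n. n < N \<and> odd n \<and> (syr ^^ (Lfun n + 1)) n < n}) / real N - suminf dd\<bar> < e"
      using L L1 KN K0 by simp
  qed
qed

lemma o_lim: "(\<lambda>N. real (card {n. n < N \<and> odd n}) / real N) \<longlonglongrightarrow> 1/2"
proof (rule lim_helper)
  fix e :: real assume e: "e > 0"
  obtain N0 where N0: "\<forall>N\<ge>N0. N > 0 \<and> \<bar>1\<bar> / real N < e" using small_eventually[of e 1] e by auto
  show "\<exists>N0. \<forall>N\<ge>N0. \<bar>real (card {n. n < N \<and> odd n}) / real N - 1/2\<bar> < e"
  proof (intro exI allI impI)
    fix N assume N: "N \<ge> N0"
    then have Np: "real N > 0" and KN: "1 / real N < e" using N0 by auto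
    have s: "{n. n < N \<and> odd n} = {n. n < N \<and> n mod 2 = 1}" by (auto simp: odd_iff_mod_2_eq_one)
    have b1: "real N / 2 - 1 \<le> real (card {n. n < N \<and> odd n})"
      unfolding s using card_mod_bounds(1)[of 2 1 N] by simp
    have b2: "real (card {n. n < N \<and> odd n}) \<le> real N / 2 + 1"
      unfolding s using card_mod_bounds(2)[of 2 1 N] by simp
    have "real (card {n. n < N \<and> odd n}) / real N \<le> (real N / 2 + 1) / real N"
      using b2 Np by (simp add: divide_right_mono)
    also have "\<dots> = 1/2 + 1 / real N" using Np by (simp add: field_simps)
    finally have u: "real (card {n. n < N \<and> odd n}) / real N \<le> 1/2 + 1 / real N" .
    have "(real N / 2 - 1) / real N \<le> real (card {n. n < N \<and> odd n}) / real N"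
      using b1 Np by (simp add: divide_right_mono)
    moreover have "(real N / 2 - 1) / real N = 1/2 - 1 / real N" using Np by (simp add: field_simps)
    ultimately have l: "1/2 - 1 / real N \<le> real (card {n. n < N \<and> odd n}) / real N" by simp
    show "\<bar>real (card {n. n < N \<and> odd n}) / real N - 1/2\<bar> < e" using u l KN by linarith
  qed
qed



lemma term_eq: "(1/2::real) ^ (l + 1) * 2 powr (- real_of_int \<lfloor>(log 2 3 - 1) * real (l + 1)\<rfloor>) = 2 * dd l"
proof -
  let ?x = "(log 2 3 - 1) * real (l+1)"
  have x0: "?x \<ge> 0" using log23 by simp
  then have f0: "\<lfloor>?x\<rfloor> \<ge> 0" by simp
  have c: "real_of_int \<lfloor>?x\<rfloor> = real (cc l)" unfolding cc_def using f0 by simp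
  have p: "(2::real) powr (- real (cc l)) = 1 / 2^(cc l)"
    by (simp add: powr_minus_divide powr_realpow)
  have "(1/2::real) ^ (l + 1) * (1 / 2^(cc l)) = 2 * (1 / 2^(l + cc l + 2))"
    by (simp add: power_add field_simps)
  then show ?thesis unfolding c p dd_def .
qed

theorem mainTheorem13:
  shows "(\<lambda>N. real (card {n. n < N \<and> odd n \<and> (syr ^^ (Lfun n + 1)) n < n})
              / real (card {n. n < N \<and> odd n}))
         \<longlonglongrightarrow>
         (\<Sum>l. (1/2) ^ (l + 1) * 2 powr (- real_of_int \<lfloor>(log 2 3 - 1) * real (l + 1)\<rfloor>))"
proof -
  have S: "(\<Sum>l. (1/2::real) ^ (l + 1) * 2 powr (- real_of_int \<lfloor>(log 2 3 - 1) * real (l + 1)\<rfloor>))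
           = suminf dd / (1/2)"
    unfolding term_eq using suminf_mult[OF summable_dd, of 2] by simp
  have F: "(\<lambda>N. real (card {n. n < N \<and> odd n \<and> (syr ^^ (Lfun n + 1)) n < n})
              / real (card {n. n < N \<and> odd n}))
        = (\<lambda>N. (real (card {n. n < N \<and> odd n \<and> (syr ^^ (Lfun n + 1)) n < n}) / real N)
              / (real (card {n. n < N \<and> odd n}) / real N))"
  proof (rule ext)
    fix N :: nat
    show "real (card {n. n < N \<and> odd n \<and> (syr ^^ (Lfun n + 1)) n < n}) / real (card {n. n < N \<and> odd n})
        = (real (card {n. n < N \<and> odd n \<and> (syr ^^ (Lfun n + 1)) n < n}) / real N)
              / (real (card {n. n < N \<and> odd n}) / real N)"
      by (cases "N = 0") (simp_all add: field_simps)
  qed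
  have "(\<lambda>N. (real (card {n. n < N \<and> odd n \<and> (syr ^^ (Lfun n + 1)) n < n}) / real N)
              / (real (card {n. n < N \<and> odd n}) / real N)) \<longlonglongrightarrow> suminf dd / (1/2)"
    by (rule tendsto_divide[OF g_lim o_lim]) simp
  then show ?thesis unfolding F S .
qed

end
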